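(* Let $n\ge4$. $\mathbb G^n_S$ is the orthogonal direct sum of the $n$-dimensional subspace $\mathbb{CPI}^n_S$ and the $\frac{n(n-3)}2$-dimensional subspace $\mathbb C^n_S$. Every $\mathcal G\in\mathbb G^n_S$ has a unique decomposition $\mathcal G=\mathcal G_{cpi}+\mathcal G_{cyclic}$ with $\mathcal G_{cpi}\in\mathbb{CPI}^n_S$ and $\mathcal G_{cyclic}\in\mathbb C^n_S$, these being the orthogonal projections of $\mathcal G$ onto the two subspaces.
   Context: $\mathbb G^n_S$ is the space of complete undirected weighted graphs without loops on $V_1,\dots,V_n$ with edge weights $d_{i,j}=d_{j,i}$, identified with $\mathbb R^{\binom n2}$ with the standard inner product. $\mathbb{CPI}^n_S$ is the subspace of graphs with $d_{j,k}=\omega_j+\omega_k$ for some reals $\omega_1,\dots,\omega_n$ (the closed path independent graphs). $\mathbb C^n_S$ is the span of all vectors $\mathbf b^n_{i,j,k,s}$ (distinct $i,j,k,s$) having $d_{i,j}=1,d_{j,k}=-1,d_{k,s}=1,d_{s,i}=-1$ and all other entries 0. *)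

theory Defs
  imports "HOL-Analysis.Analysis"
begin

text \<open>Vertices V_1..V_n are the elements of a finite type 'n (n = CARD('n)).
A complete undirected loopless weighted graph is represented by its symmetric
weight matrix with zero diagonal, an element of real^'n^'n.\<close>

definition graphS :: "(real^'n^'n) set" where
  "graphS = {d. (\<forall>i j. d$i$j = d$j$i) \<and> (\<forall>i. d$i$i = 0)}"

definition cpiS :: "(real^'n^'n) set" where
  "cpiS = {d \<in> graphS. \<exists>\<omega>::'n \<Rightarrow> real. \<forall>j k. j \<noteq> k \<longrightarrow> d$j$k = \<omega> j + \<omega> k}"

definition bvec :: "'n \<Rightarrow> 'n \<Rightarrow> 'n \<Rightarrow> 'n \<Rightarrow> real^'n^'n" where
  "bvec i j k s = (\<chi> a b.
      if {a,b} = {i,j} \<or> {a,b} = {k,s} then 1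
      else if {a,b} = {j,k} \<or> {a,b} = {s,i} then -1 else 0)"

definition cycS :: "(real^'n^'n) set" where
  "cycS = span {bvec i j k s | i j k s. distinct [i,j,k,s]}"

definition is_orth_proj :: "(real^'n^'n) set \<Rightarrow> real^'n^'n \<Rightarrow> real^'n^'n \<Rightarrow> bool" where
  "is_orth_proj U x p \<longleftrightarrow> p \<in> U \<and> (\<forall>u\<in>U. orthogonal (x - p) u)"

end

theory Submission
  imports Defs
begin


definition E :: "'n \<Rightarrow> 'n \<Rightarrow> real^'n^'n" where
  "E a b = (\<chi> x y. if x = a \<and> y = b then 1 else 0)"

lemma inner_E: "inner d (E a b) = d$a$b"
proof -
  have "inner d (E a b) = (\<Sum>x\<in>UNIV. \<Sum>y\<in>UNIV. d$x$y * (if x = a \<and> y = b then 1 else 0))"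
    by (simp add: inner_vec_def E_def)
  also have "\<dots> = (\<Sum>x\<in>UNIV. if x = a then d$x$b else 0)"
    by (rule sum.cong) (auto simp: if_distrib cong: if_cong)
  also have "\<dots> = d$a$b" by simp
  finally show ?thesis .
qed

lemma bvec_E:
  assumes "distinct [i,j,k,s]"
  shows "bvec i j k s = E i j + E j i + E k s + E s k - E j k - E k j - E s i - E i s"
  using assms unfolding bvec_def E_def
  by (simp add: vec_eq_iff doubleton_eq_iff) (auto)

lemma inner_bvec:
  assumes "distinct [i,j,k,s]"
  shows "inner d (bvec i j k s) = d$i$j + d$j$i + d$k$s + d$s$k - d$j$k - d$k$j - d$s$i - d$i$s"
  using assms by (simp add: bvec_E inner_diff_right inner_add_right inner_E)



lemma cpi_from_rel:
  fixes D :: "'n \<Rightarrow> 'n \<Rightarrow> real" and a b c :: 'n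
  assumes sym: "\<And>i j. D i j = D j i"
    and rel: "\<And>i j k s. distinct [i,j,k,s] \<Longrightarrow> D i j + D k s = D j k + D s i"
    and abc: "distinct [a,b,c]"
  shows "\<exists>\<omega>. \<forall>j k. j \<noteq> k \<longrightarrow> D j k = \<omega> j + \<omega> k"
proof -
  define \<omega> where "\<omega> j = (if j = a then (D a b + D a c - D b c)/2
     else if j = b then (D a b + D b c - D a c)/2 else (D j a + D j b - D a b)/2)" for j
  have main: "D j k = \<omega> j + \<omega> k" if "j \<noteq> k" for j k
  proof -
    consider "j = a \<and> k = b" | "j = b \<and> k = a" | "j = a \<and> k \<noteq> b" | "j = b \<and> k \<noteq> a"
      | "k = a \<and> j \<noteq> b" | "k = b \<and> j \<noteq> a" | "j \<noteq> a \<and> j \<noteq> b \<and> k \<noteq> a \<and> k \<noteq> b"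
      by blast
    then show ?thesis
    proof cases
      case 1 then show ?thesis using abc by (simp add: \<omega>_def sym[of b a] field_simps) 
    next
      case 2 then show ?thesis using abc by (simp add: \<omega>_def sym[of b a] field_simps) 
    next
      case 3
      show ?thesis
      proof (cases "k = c")
        case True then show ?thesis using 3 abc that by (simp add: \<omega>_def sym[of b c] sym[of c a] sym[of b a] field_simps)
      next
        case False
        have "D c a + D k b = D a k + D b c" using rel[of c a k b] 3 abc that False by auto
        then show ?thesis using 3 abc that False
          by (simp add: \<omega>_def sym[of k a] sym[of c a] sym[of k b] field_simps)
      qed
    next
      case 4
      show ?thesis
      proof (cases "k = c")
        case True then show ?thesis using 4 abc that by (simp add: \<omega>_def sym[of b c] sym[of c a] sym[of b a] field_simps)
      next
        case False
        have "D c b + D k a = D b k + D a c" using rel[of c b k a] 4 abc that False by auto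
        then show ?thesis using 4 abc that False
          by (simp add: \<omega>_def sym[of k a] sym[of c a] sym[of k b] sym[of c b] sym[of b a] field_simps)
      qed
    next
      case 5
      show ?thesis
      proof (cases "j = c")
        case True then show ?thesis using 5 abc that by (simp add: \<omega>_def sym[of b c] sym[of c a] sym[of b a] field_simps)
      next
        case False
        have "D c a + D j b = D a j + D b c" using rel[of c a j b] 5 abc that False by auto
        then show ?thesis using 5 abc that False
          by (simp add: \<omega>_def sym[of j a] sym[of c a] sym[of j b] field_simps)
      qed
    next
      case 6
      show ?thesis
      proof (cases "j = c")
        case True then show ?thesis using 6 abc that by (simp add: \<omega>_def sym[of b c] sym[of c a] sym[of b a] field_simps)
      next
        case False
        have "D c b + D j a = D b j + D a c" using rel[of c b j a] 6 abc that False by auto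
        then show ?thesis using 6 abc that False
          by (simp add: \<omega>_def sym[of j a] sym[of c a] sym[of j b] sym[of c b] sym[of b a] field_simps)
      qed
    next
      case 7
      have r1: "D j a + D k b = D a k + D b j" using rel[of j a k b] 7 abc that by auto
      have r2: "D j k + D a b = D k a + D b j" using rel[of j k a b] 7 abc that by auto
      show ?thesis using 7 r1 r2 sym[of a k] sym[of b j] by (simp add: \<omega>_def field_simps)
    qed
  qed
  then show ?thesis by blast
qed

lemma subspace_graphS: "subspace graphS"
  unfolding subspace_def graphS_def by simp

lemma subspace_cpiS: "subspace (cpiS :: (real^'n^'n) set)"
  unfolding subspace_def
proof (intro conjI ballI allI)
  show "0 \<in> cpiS" unfolding cpiS_def graphS_def by (auto intro!: exI[of _ "\<lambda>_. 0"])
next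
  fix x y :: "real^'n^'n" assume "x \<in> cpiS" "y \<in> cpiS"
  then obtain w v where "x \<in> graphS" "y \<in> graphS" "\<forall>j k. j \<noteq> k \<longrightarrow> x$j$k = w j + w k"
    "\<forall>j k. j \<noteq> k \<longrightarrow> y$j$k = v j + v k" unfolding cpiS_def by auto
  then show "x + y \<in> cpiS" unfolding cpiS_def graphS_def
    by (auto intro!: exI[of _ "\<lambda>j. w j + v j"])
next
  fix c :: real and x :: "real^'n^'n" assume "x \<in> cpiS"
  then obtain w where "x \<in> graphS" "\<forall>j k. j \<noteq> k \<longrightarrow> x$j$k = w j + w k"
    unfolding cpiS_def by auto
  then show "c *\<^sub>R x \<in> cpiS" unfolding cpiS_def graphS_def
    by (auto intro!: exI[of _ "\<lambda>j. c * w j"] simp: distrib_left)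
qed

lemma bvec_graphS: "distinct [i,j,k,s] \<Longrightarrow> bvec i j k s \<in> graphS"
  unfolding graphS_def bvec_def by (auto simp: insert_commute)

lemma cycS_graphS: "cycS \<subseteq> graphS"
  unfolding cycS_def by (rule span_minimal) (auto intro: bvec_graphS subspace_graphS)

lemma cpi_orth_bvec:
  assumes "x \<in> cpiS" "distinct [i,j,k,s]"
  shows "orthogonal x (bvec i j k s)"
proof -
  obtain w where g: "x \<in> graphS" and w: "\<forall>j k. j \<noteq> k \<longrightarrow> x$j$k = w j + w k"
    using assms(1) unfolding cpiS_def by auto
  show ?thesis using assms(2) w unfolding orthogonal_def
    by (auto simp add: inner_bvec)
qed

lemma cpi_orth_cyc: "x \<in> cpiS \<Longrightarrow> y \<in> cycS \<Longrightarrow> orthogonal x y"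
  unfolding cycS_def
  by (rule orthogonal_to_span) (auto intro: cpi_orth_bvec)

lemma three_distinct:
  assumes "CARD('n::finite) \<ge> 3"
  shows "\<exists>k l. distinct [j::'n,k,l]"
proof -
  have "card (UNIV - {j}) \<ge> 2" using assms by (simp add: card_Diff_singleton)
  then obtain k where k: "k \<in> UNIV - {j}" by (metis card.empty empty_iff not_numeral_le_zero subsetI subset_antisym)
  have "card (UNIV - {j} - {k}) \<ge> 1" using assms k by (simp add: card_Diff_singleton)
  then have "UNIV - {j} - {k} \<noteq> {}" by (metis card.empty not_one_le_zero)
  then obtain l where "l \<in> UNIV - {j} - {k}" by blast
  then show ?thesis using k by auto
qed

lemma orth_imp_cpi:
  assumes n: "CARD('n::finite) \<ge> 3" and g: "(z::real^'n^'n) \<in> graphS"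
    and o: "\<And>i j k s. distinct [i,j,k,s] \<Longrightarrow> orthogonal z (bvec i j k s)"
  shows "z \<in> cpiS"
proof -
  obtain a :: 'n where True by simp
  obtain b c where abc: "distinct [a,b,c]" using three_distinct[OF n] by blast
  have sym: "\<And>i j. z$i$j = z$j$i" and dg: "\<And>i. z$i$i = 0" using g unfolding graphS_def by auto
  have rel: "z$i$j + z$k$s = z$j$k + z$s$i" if "distinct [i,j,k,s]" for i j k s
    using o[OF that] that unfolding orthogonal_def
    by (simp add: inner_bvec sym[of j i] sym[of s k] sym[of k j] sym[of i s])
  obtain w where "\<forall>j k. j \<noteq> k \<longrightarrow> z$j$k = w j + w k"
    using cpi_from_rel[of "\<lambda>i j. z$i$j", OF sym rel abc] by blast
  then show ?thesis using g unfolding cpiS_def by auto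
qed

definition Fp :: "'n set \<Rightarrow> real^'n^'n" where
  "Fp A = (\<chi> x y. if x \<noteq> y \<and> {x,y} = A then 1 else 0)"

lemma Fp_graphS: "Fp A \<in> graphS"
  unfolding Fp_def graphS_def by (auto simp: insert_commute)

lemma Fp_two: assumes "card A = 2" shows "\<exists>x y. x \<noteq> y \<and> A = {x,y} \<and> Fp A $ x $ y = 1"
proof -
  obtain x y where "x \<noteq> y" "A = {x,y}" using assms by (meson card_2_iff)
  then show ?thesis unfolding Fp_def by auto
qed

lemma F_inj: "inj_on Fp {A::'n::finite set. card A = 2}"
proof (rule inj_onI)
  fix A B assume A: "A \<in> {A::'n::finite set. card A = 2}" and "B \<in> {A::'n::finite set. card A = 2}" and e: "Fp A = Fp B"
  obtain x y where "x \<noteq> y" "A = {x,y}" "Fp A $ x $ y = 1" using Fp_two[of A] A by blast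
  then have "Fp B $ x $ y = 1" using e by simp
  then have "{x,y} = B" unfolding Fp_def by (auto split: if_splits)
  then show "A = B" using \<open>A = {x,y}\<close> by simp
qed

lemma F_indep: "independent (Fp ` {A::'n::finite set. card A = 2})"
proof (rule pairwise_orthogonal_independent)
  show "0 \<notin> Fp ` {A::'n::finite set. card A = 2}"
  proof
    assume "0 \<in> Fp ` {A::'n::finite set. card A = 2}"
    then obtain A :: "'n set" where "card A = 2" "Fp A = 0" by auto
    then obtain x y where "Fp A $ x $ y = 1" using Fp_two[of A] by blast
    then show False using \<open>Fp A = 0\<close> by simp
  qed
  show "pairwise orthogonal (Fp ` {A::'n::finite set. card A = 2})"
  proof (rule pairwiseI)
    fix u v assume "u \<in> Fp ` {A::'n::finite set. card A = 2}" "v \<in> Fp ` {A::'n::finite set. card A = 2}" "u \<noteq> v"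
    then obtain A B where uv: "u = Fp A" "v = Fp B" "A \<noteq> B" by auto
    have "inner u v = (\<Sum>x\<in>UNIV. \<Sum>y\<in>UNIV. u$x$y * v$x$y)" by (simp add: inner_vec_def)
    also have "\<dots> = 0" using uv by (intro sum.neutral ballI) (auto simp: Fp_def)
    finally show "orthogonal u v" by (simp add: orthogonal_def)
  qed
qed

lemma F_span: "span (Fp ` {A::'n::finite set. card A = 2}) = (graphS :: (real^'n^'n) set)"
proof
  show "span (Fp ` {A::'n::finite set. card A = 2}) \<subseteq> (graphS :: (real^'n^'n) set)"
    by (rule span_minimal) (auto intro: Fp_graphS subspace_graphS)
next
  show "graphS \<subseteq> span (Fp ` {A::'n::finite set. card A = 2})"
  proof
    fix d :: "real^'n^'n" assume d: "d \<in> graphS"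
    have sym: "\<And>i j. d$i$j = d$j$i" and dg: "\<And>i. d$i$i = 0" using d unfolding graphS_def by auto
    have mem: "Fp {a,b} \<in> span (Fp ` {A::'n::finite set. card A = 2})" for a b
    proof (cases "a = b")
      case True
      then have "Fp {a,b} = 0" unfolding Fp_def by (auto simp: vec_eq_iff)
      then show ?thesis by (simp add: span_zero)
    next
      case False
      then show ?thesis by (intro span_base) auto
    qed
    have eq: "d = (\<Sum>a\<in>UNIV. \<Sum>b\<in>UNIV. (d$a$b/2) *\<^sub>R Fp {a,b})"
    proof (subst vec_eq_iff, intro allI, subst vec_eq_iff, intro allI)
      fix x y
      have "(\<Sum>a\<in>UNIV. \<Sum>b\<in>UNIV. (d$a$b/2) *\<^sub>R Fp {a,b}) $ x $ y
          = (\<Sum>a\<in>UNIV. \<Sum>b\<in>UNIV. (d$a$b/2) * (if x \<noteq> y \<and> {x,y} = {a,b} then 1 else 0))"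
        by (simp add: Fp_def)
      also have "\<dots> = (\<Sum>a\<in>UNIV. if x \<noteq> y \<and> a = x then d$x$y/2 else if x \<noteq> y \<and> a = y then d$y$x/2 else 0)"
      proof (rule sum.cong[OF refl])
        fix a
        show "(\<Sum>b\<in>UNIV. (d$a$b/2) * (if x \<noteq> y \<and> {x,y} = {a,b} then 1 else 0))
          = (if x \<noteq> y \<and> a = x then d$x$y/2 else if x \<noteq> y \<and> a = y then d$y$x/2 else 0)"
        proof (cases "x \<noteq> y \<and> a = x")
          case True
          then have "(\<Sum>b\<in>UNIV. (d$a$b/2) * (if x \<noteq> y \<and> {x,y} = {a,b} then 1 else 0))
             = (\<Sum>b\<in>UNIV. if b = y then d$x$y/2 else 0)"
            by (intro sum.cong) (auto simp: doubleton_eq_iff)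
          then show ?thesis using True by simp
        next
          case F1: False
          show ?thesis
          proof (cases "x \<noteq> y \<and> a = y")
            case True
            then have "(\<Sum>b\<in>UNIV. (d$a$b/2) * (if x \<noteq> y \<and> {x,y} = {a,b} then 1 else 0))
               = (\<Sum>b\<in>UNIV. if b = x then d$y$x/2 else 0)"
              by (intro sum.cong) (auto simp: doubleton_eq_iff)
            then show ?thesis using True by (cases "y = x") simp_all
          next
            case False
            have "(\<Sum>b\<in>UNIV. (d$a$b/2) * (if x \<noteq> y \<and> {x,y} = {a,b} then 1 else 0))
               = 0"
              by (rule sum.neutral) (use F1 False in \<open>auto simp: doubleton_eq_iff\<close>)
            then show ?thesis using F1 False by auto
          qed
        qed
      qed
      also have "\<dots> = d$x$y"
      proof (cases "x = y")
        case True then show ?thesis by (simp add: dg)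
      next
        case False
        have "(\<Sum>a\<in>UNIV. if x \<noteq> y \<and> a = x then d$x$y/2 else if x \<noteq> y \<and> a = y then d$y$x/2 else 0)
          = (\<Sum>a\<in>UNIV. (if a = x then d$x$y/2 else 0) + (if a = y then d$y$x/2 else 0))"
          using False by (intro sum.cong) auto
        also have "\<dots> = d$x$y/2 + d$y$x/2" by (simp add: sum.distrib)
        finally show ?thesis by (simp add: sym[of y x])
      qed
      finally show "d $ x $ y = (\<Sum>a\<in>UNIV. \<Sum>b\<in>UNIV. (d$a$b/2) *\<^sub>R Fp {a,b}) $ x $ y" by simp
    qed
    show "d \<in> span (Fp ` {A::'n::finite set. card A = 2})"
      by (subst eq) (intro span_sum span_scale mem)
  qed
qed

lemma dim_graphS: "dim (graphS :: (real^'n^'n) set) = CARD('n) choose 2"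
proof -
  have "dim (graphS :: (real^'n^'n) set) = card (Fp ` {A::'n::finite set. card A = 2})"
    using dim_span_eq_card_independent[OF F_indep[where 'n='n]] F_span[where 'n='n] by (simp add: dim_span)
  also have "\<dots> = card {A::'n::finite set. card A = 2}" using F_inj[where 'n='n] by (simp add: card_image)
  also have "\<dots> = CARD('n) choose 2" using n_subsets[of "UNIV::'n set" 2] by simp
  finally show ?thesis .
qed

definition fcpi :: "real^'n \<Rightarrow> real^'n^'n" where
  "fcpi w = (\<chi> j k. if j = k then 0 else w$j + w$k)"

lemma linear_fcpi: "linear fcpi"
  by (rule linearI) (auto simp: fcpi_def vec_eq_iff algebra_simps)

lemma range_fcpi: "range fcpi = cpiS"
proof
  show "range fcpi \<subseteq> cpiS"
    unfolding cpiS_def graphS_def fcpi_def by (auto simp: add.commute)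
next
  show "cpiS \<subseteq> range fcpi"
  proof
    fix d assume "d \<in> cpiS"
    then obtain w where g: "d \<in> graphS" and w: "\<forall>j k. j \<noteq> k \<longrightarrow> d$j$k = w j + w k"
      unfolding cpiS_def by auto
    have "d = fcpi (\<chi> j. w j)" using g w unfolding graphS_def fcpi_def by (auto simp: vec_eq_iff)
    then show "d \<in> range fcpi" by blast
  qed
qed

lemma inj_fcpi:
  assumes "CARD('n::finite) \<ge> 3"
  shows "inj (fcpi :: real^'n \<Rightarrow> _)"
proof (rule injI)
  fix w v :: "real^'n" assume e: "fcpi w = fcpi v"
  have "w$j = v$j" for j
  proof -
    obtain k l where "distinct [j,k,l]" using three_distinct[OF assms] by blast
    moreover have "fcpi w $ j $ k = fcpi v $ j $ k" "fcpi w $ j $ l = fcpi v $ j $ l"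
      "fcpi w $ k $ l = fcpi v $ k $ l" using e by auto
    ultimately show ?thesis by (simp add: fcpi_def)
  qed
  then show "w = v" by (simp add: vec_eq_iff)
qed

lemma dim_cpiS:
  assumes "CARD('n::finite) \<ge> 3"
  shows "dim (cpiS :: (real^'n^'n) set) = CARD('n)"
proof -
  have "dim (fcpi ` (UNIV :: (real^'n) set)) = dim (UNIV :: (real^'n) set)"
    by (rule dim_image_eq[OF linear_fcpi]) (use inj_fcpi[OF assms] in \<open>auto intro: inj_on_subset\<close>)
  then show ?thesis using range_fcpi[where 'a='n] by (simp only:) simp
qed

theorem theorem11:
  assumes "CARD('n::finite) \<ge> 4"
  shows "subspace (graphS :: (real^'n^'n) set)
    \<and> subspace (cpiS :: (real^'n^'n) set) \<and> subspace (cycS :: (real^'n^'n) set)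
    \<and> cpiS \<subseteq> (graphS :: (real^'n^'n) set) \<and> cycS \<subseteq> (graphS :: (real^'n^'n) set)
    \<and> dim (cpiS :: (real^'n^'n) set) = CARD('n)
    \<and> dim (cycS :: (real^'n^'n) set) = CARD('n) * (CARD('n) - 3) div 2
    \<and> (\<forall>x \<in> (cpiS :: (real^'n^'n) set). \<forall>y \<in> cycS. orthogonal x y)
    \<and> graphS = {x + y | x y. x \<in> (cpiS :: (real^'n^'n) set) \<and> y \<in> cycS}
    \<and> (\<forall>G \<in> (graphS :: (real^'n^'n) set).
          (\<exists>!p. fst p \<in> cpiS \<and> snd p \<in> cycS \<and> G = fst p + snd p)
        \<and> (\<forall>a b. a \<in> cpiS \<and> b \<in> cycS \<and> G = a + b \<longrightarrow>
                 is_orth_proj cpiS G a \<and> is_orth_proj cycS G b))"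
proof -
  have n3: "CARD('n) \<ge> 3" using assms by simp
  have sg: "subspace (graphS :: (real^'n^'n) set)" by (rule subspace_graphS)
  have sp: "subspace (cpiS :: (real^'n^'n) set)" by (rule subspace_cpiS)
  have sc: "subspace (cycS :: (real^'n^'n) set)" unfolding cycS_def by (rule subspace_span)
  have cg: "cpiS \<subseteq> (graphS :: (real^'n^'n) set)" unfolding cpiS_def by auto
  have yg: "cycS \<subseteq> (graphS :: (real^'n^'n) set)" by (rule cycS_graphS)
  have orth: "\<forall>x \<in> (cpiS :: (real^'n^'n) set). \<forall>y \<in> cycS. orthogonal x y"
    using cpi_orth_cyc by blast
  have int0: "(cpiS :: (real^'n^'n) set) \<inter> cycS = {0}"
  proof
    show "cpiS \<inter> cycS \<subseteq> ({0} :: (real^'n^'n) set)"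
    proof
      fix x :: "real^'n^'n" assume "x \<in> cpiS \<inter> cycS"
      then have "orthogonal x x" using orth by auto
      then show "x \<in> {0}" by (simp add: orthogonal_def)
    qed
    show "{0} \<subseteq> (cpiS :: (real^'n^'n) set) \<inter> cycS"
      using sp sc by (simp add: subspace_0)
  qed
  have decomp: "graphS = {x + y | x y. x \<in> (cpiS :: (real^'n^'n) set) \<and> y \<in> cycS}"
  proof
    show "graphS \<subseteq> {x + y | x y. x \<in> (cpiS :: (real^'n^'n) set) \<and> y \<in> cycS}"
    proof
      fix d :: "real^'n^'n" assume d: "d \<in> graphS"
      obtain y z where y: "y \<in> span {bvec i j k s | i j k s. distinct [i,j,k,s]}"
        and z: "\<And>w. w \<in> span {bvec i j k s | i j k s. distinct [i,j,k,s]} \<Longrightarrow> orthogonal z w"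
        and e: "d = y + z"
        using orthogonal_subspace_decomp_exists by blast
      have yc: "y \<in> cycS" using y unfolding cycS_def .
      have "z = d - y" using e by simp
      then have zg: "z \<in> graphS" using d yc yg sg by (simp add: subspace_diff subset_iff)
      have "z \<in> cpiS"
      proof (rule orth_imp_cpi[OF n3 zg])
        fix i j k s :: 'n assume "distinct [i,j,k,s]"
        then show "orthogonal z (bvec i j k s)" by (intro z span_base) blast
      qed
      moreover have "d = z + y" using e by (simp add: add.commute)
      ultimately show "d \<in> {x + y | x y. x \<in> cpiS \<and> y \<in> cycS}" using yc by blast
    qed
    show "{x + y | x y. x \<in> (cpiS :: (real^'n^'n) set) \<and> y \<in> cycS} \<subseteq> graphS"
      using cg yg sg by (auto intro: subspace_add)
  qed
  have dp: "dim (cpiS :: (real^'n^'n) set) = CARD('n)" by (rule dim_cpiS[OF n3])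
  have "dim (graphS :: (real^'n^'n) set) + dim ((cpiS :: (real^'n^'n) set) \<inter> cycS) = dim (cpiS :: (real^'n^'n) set) + dim (cycS :: (real^'n^'n) set)"
    using dim_sums_Int[OF sp sc] decomp by simp
  moreover have "dim (graphS :: (real^'n^'n) set) = CARD('n) choose 2" by (rule dim_graphS)
  ultimately have "CARD('n) choose 2 = CARD('n) + dim (cycS :: (real^'n^'n) set)"
    using int0 dp by simp
  then have "dim (cycS :: (real^'n^'n) set) = CARD('n) * (CARD('n) - 1) div 2 - CARD('n)"
    by (simp add: choose_two)
  also have "\<dots> = CARD('n) * (CARD('n) - 3) div 2"
  proof -
    define m where "m = CARD('n)"
    have m: "m \<ge> 4" using assms m_def by simp
    have "m * (m - 1) = m * (m - 3) + 2 * m" using m by (simp add: algebra_simps diff_mult_distrib2)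
    then have "m * (m - 1) div 2 = m * (m - 3) div 2 + m" by simp
    then show ?thesis unfolding m_def[symmetric] by simp
  qed
  finally have dc: "dim (cycS :: (real^'n^'n) set) = CARD('n) * (CARD('n) - 3) div 2" .
  have last: "\<forall>G \<in> (graphS :: (real^'n^'n) set).
          (\<exists>!p. fst p \<in> cpiS \<and> snd p \<in> cycS \<and> G = fst p + snd p)
        \<and> (\<forall>a b. a \<in> cpiS \<and> b \<in> cycS \<and> G = a + b \<longrightarrow>
                 is_orth_proj cpiS G a \<and> is_orth_proj cycS G b)"
  proof
    fix G :: "real^'n^'n" assume G: "G \<in> graphS"
    have "G \<in> {x + y | x y. x \<in> (cpiS :: (real^'n^'n) set) \<and> y \<in> cycS}" using G decomp by simp
    then obtain a b where ab: "a \<in> cpiS" "b \<in> cycS" "G = a + b" unfolding mem_Collect_eq by blast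
    have uniq: "a' = a \<and> b' = b" if "a' \<in> cpiS" "b' \<in> cycS" "G = a' + b'" for a' b'
    proof -
      have "a' - a = b - b'" using that ab by (simp add: algebra_simps)
      moreover have "a' - a \<in> cpiS" using that ab sp by (simp add: subspace_diff)
      moreover have "b - b' \<in> cycS" using that ab sc by (simp add: subspace_diff)
      ultimately have "a' - a \<in> cpiS \<inter> cycS" by (metis IntI)
      then have "a' - a = 0" using int0 by (metis singletonD)
      then show ?thesis using that ab by simp
    qed
    show "(\<exists>!p. fst p \<in> cpiS \<and> snd p \<in> cycS \<and> G = fst p + snd p)
        \<and> (\<forall>a b. a \<in> cpiS \<and> b \<in> cycS \<and> G = a + b \<longrightarrow>
                 is_orth_proj cpiS G a \<and> is_orth_proj cycS G b)"
    proof
      show "\<exists>!p. fst p \<in> cpiS \<and> snd p \<in> cycS \<and> G = fst p + snd p"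
      proof (rule ex1I[of _ "(a,b)"])
        show "fst (a, b) \<in> cpiS \<and> snd (a, b) \<in> cycS \<and> G = fst (a, b) + snd (a, b)" using ab by simp
        fix p :: "(real^'n^'n) \<times> (real^'n^'n)"
        assume "fst p \<in> cpiS \<and> snd p \<in> cycS \<and> G = fst p + snd p"
        then show "p = (a, b)" using uniq[of "fst p" "snd p"] by (cases p) auto
      qed
      show "\<forall>a b. a \<in> cpiS \<and> b \<in> cycS \<and> G = a + b \<longrightarrow>
                 is_orth_proj cpiS G a \<and> is_orth_proj cycS G b"
      proof (intro allI impI)
        fix a b assume h: "a \<in> cpiS \<and> b \<in> cycS \<and> G = a + b"
        have "G - a = b" "G - b = a" using h by auto
        then show "is_orth_proj cpiS G a \<and> is_orth_proj cycS G b"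
          unfolding is_orth_proj_def using h orth by (auto simp: orthogonal_commute)
      qed
    qed
  qed
  show ?thesis by (intro conjI sg sp sc cg yg dp dc orth decomp last)
qed

end
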